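(* Let $G$ be a SIN topological group and $\Omega$ a topological group. Then the right action of $G$ on $\mathcal R(\Omega,G)$ by conjugation, $(\varphi,g)\mapsto g^{-1}\varphi g$, is uniformly continuous, where $G$ carries its uniform structure with entourages $\{(\tilde g,g):\tilde gg^{-1}\in V\}$ and $\mathcal R(\Omega,G)$ carries the uniform structure $\mathbf U_{\mathcal R}$.
   Context: SIN: the identity has a fundamental system of conjugation-invariant neighbourhoods. $\mathcal R(\Omega,G)$ is the set of continuous homomorphisms $\Omega\to G$. $\mathcal V_G$ is the set of open neighbourhoods $V$ of the identity of $G$ with $V=V^{-1}$. $\mathbf U_{\mathcal R}$ is the uniform structure on $\mathcal R(\Omega,G)$ with fundamental entourages $\mathcal O(K,V)=\{(h,\tilde h):\tilde h(c)h(c^{-1})\in V\ \forall c\in K\}$, $K\subset\Omega$ compact, $V\in\mathcal V_G$. (In the paper $\Omega=\Omega_C$ for an $X$-groupoid $C$.) *)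

theory Defs
  imports "HOL-Analysis.Analysis" "HOL-Algebra.Group"
begin

definition topological_group :: "('a, 'm) monoid_scheme \<Rightarrow> 'a topology \<Rightarrow> bool" where
  "topological_group G T \<longleftrightarrow> group G \<and> topspace T = carrier G \<and>
     continuous_map (prod_topology T T) T (\<lambda>(x, y). x \<otimes>\<^bsub>G\<^esub> y) \<and>
     continuous_map T T (\<lambda>x. inv\<^bsub>G\<^esub> x)"

definition sym_nhds :: "('a, 'm) monoid_scheme \<Rightarrow> 'a topology \<Rightarrow> 'a set set" where
  "sym_nhds G T = {V. openin T V \<and> \<one>\<^bsub>G\<^esub> \<in> V \<and> (\<lambda>x. inv\<^bsub>G\<^esub> x) ` V = V}"

definition SIN_group :: "('a, 'm) monoid_scheme \<Rightarrow> 'a topology \<Rightarrow> bool" where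
  "SIN_group G T \<longleftrightarrow> topological_group G T \<and>
     (\<forall>U. openin T U \<and> \<one>\<^bsub>G\<^esub> \<in> U \<longrightarrow>
        (\<exists>N. N \<subseteq> U \<and> (\<exists>W. openin T W \<and> \<one>\<^bsub>G\<^esub> \<in> W \<and> W \<subseteq> N) \<and>
             (\<forall>g \<in> carrier G. (\<lambda>x. g \<otimes>\<^bsub>G\<^esub> x \<otimes>\<^bsub>G\<^esub> inv\<^bsub>G\<^esub> g) ` N = N)))"

definition cont_homs ::
  "('b, 'n) monoid_scheme \<Rightarrow> 'b topology \<Rightarrow> ('a, 'm) monoid_scheme \<Rightarrow> 'a topology \<Rightarrow> ('b \<Rightarrow> 'a) set" where
  "cont_homs H TH G TG = {h. h \<in> hom H G \<and> continuous_map TH TG h}"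

definition ent_R ::
  "('b, 'n) monoid_scheme \<Rightarrow> ('a, 'm) monoid_scheme \<Rightarrow> 'b set \<Rightarrow> 'a set \<Rightarrow> (('b \<Rightarrow> 'a) \<times> ('b \<Rightarrow> 'a)) set" where
  "ent_R H G K V = {(h, h'). \<forall>c \<in> K. h' c \<otimes>\<^bsub>G\<^esub> h (inv\<^bsub>H\<^esub> c) \<in> V}"

definition ent_G :: "('a, 'm) monoid_scheme \<Rightarrow> 'a set \<Rightarrow> ('a \<times> 'a) set" where
  "ent_G G V = {(g', g). g' \<otimes>\<^bsub>G\<^esub> inv\<^bsub>G\<^esub> g \<in> V}"

definition conj_act :: "('a, 'm) monoid_scheme \<Rightarrow> ('b \<Rightarrow> 'a) \<Rightarrow> 'a \<Rightarrow> ('b \<Rightarrow> 'a)" where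
  "conj_act G \<phi> g = (\<lambda>c. inv\<^bsub>G\<^esub> g \<otimes>\<^bsub>G\<^esub> \<phi> c \<otimes>\<^bsub>G\<^esub> g)"

end

theory Submission
  imports Defs
begin

lemma (in group) canc1: "x \<in> carrier G \<Longrightarrow> y \<in> carrier G \<Longrightarrow> inv x \<otimes> (x \<otimes> y) = y"
  by (simp add: m_assoc[symmetric])
lemma (in group) canc2: "x \<in> carrier G \<Longrightarrow> y \<in> carrier G \<Longrightarrow> x \<otimes> (inv x \<otimes> y) = y"
  by (simp add: m_assoc[symmetric])
lemma (in group) conj_eq: "a \<in> carrier G \<Longrightarrow> b \<in> carrier G \<Longrightarrow> g \<in> carrier G \<Longrightarrow> g' \<in> carrier G \<Longrightarrow>
  (inv g' \<otimes> a \<otimes> g') \<otimes> (inv g \<otimes> inv b \<otimes> g) = inv g' \<otimes> ((a \<otimes> inv b) \<otimes> (b \<otimes> (g' \<otimes> inv g) \<otimes> inv b) \<otimes> inv (g' \<otimes> inv g)) \<otimes> inv (inv g')"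
  by (simp add: m_assoc inv_mult_group canc1 canc2)

lemma tg_mult_nbhd:
  assumes tg: "topological_group G T" and W0: "openin T W0" "\<one>\<^bsub>G\<^esub> \<in> W0"
  shows "\<exists>U. openin T U \<and> \<one>\<^bsub>G\<^esub> \<in> U \<and> (\<forall>x\<in>U. \<forall>y\<in>U. x \<otimes>\<^bsub>G\<^esub> y \<in> W0)"
proof -
  have grp: "group G" and tsp: "topspace T = carrier G"
    and cm: "continuous_map (prod_topology T T) T (\<lambda>(x, y). x \<otimes>\<^bsub>G\<^esub> y)"
    using tg unfolding topological_group_def by auto
  let ?M = "{p \<in> topspace (prod_topology T T). (\<lambda>(x, y). x \<otimes>\<^bsub>G\<^esub> y) p \<in> W0}"
  have "openin (prod_topology T T) ?M"
    by (rule openin_continuous_map_preimage[OF cm W0(1)])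
  moreover have "(\<one>\<^bsub>G\<^esub>, \<one>\<^bsub>G\<^esub>) \<in> ?M"
    using W0 grp tsp by (simp add: group.is_monoid)
  ultimately obtain A B where AB: "openin T A" "openin T B" "\<one>\<^bsub>G\<^esub> \<in> A" "\<one>\<^bsub>G\<^esub> \<in> B" "A \<times> B \<subseteq> ?M"
    unfolding openin_prod_topology_alt by blast
  show ?thesis
    apply (rule exI[of _ "A \<inter> B"])
    using AB by auto
qed

lemma tg_sym:
  assumes tg: "topological_group G T" and U: "openin T U" "\<one>\<^bsub>G\<^esub> \<in> U"
  shows "{x \<in> U. inv\<^bsub>G\<^esub> x \<in> U} \<in> sym_nhds G T"
proof -
  have grp: "group G" and tsp: "topspace T = carrier G"
    and ci: "continuous_map T T (\<lambda>x. inv\<^bsub>G\<^esub> x)"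
    using tg unfolding topological_group_def by auto
  have Uc: "U \<subseteq> carrier G" using openin_subset[OF U(1)] tsp by simp
  have "openin T {x \<in> U. inv\<^bsub>G\<^esub> x \<in> U}"
    by (rule openin_continuous_map_preimage_gen[OF ci U(1) U(1)])
  moreover have "\<one>\<^bsub>G\<^esub> \<in> {x \<in> U. inv\<^bsub>G\<^esub> x \<in> U}" using U grp by (simp add: monoid.inv_one group.is_monoid)
  moreover have "(\<lambda>x. inv\<^bsub>G\<^esub> x) ` {x \<in> U. inv\<^bsub>G\<^esub> x \<in> U} = {x \<in> U. inv\<^bsub>G\<^esub> x \<in> U}"
  proof
    show "(\<lambda>x. inv\<^bsub>G\<^esub> x) ` {x \<in> U. inv\<^bsub>G\<^esub> x \<in> U} \<subseteq> {x \<in> U. inv\<^bsub>G\<^esub> x \<in> U}"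
      using Uc grp by (auto simp: group.inv_inv)
    show "{x \<in> U. inv\<^bsub>G\<^esub> x \<in> U} \<subseteq> (\<lambda>x. inv\<^bsub>G\<^esub> x) ` {x \<in> U. inv\<^bsub>G\<^esub> x \<in> U}"
    proof
      fix x assume x: "x \<in> {x \<in> U. inv\<^bsub>G\<^esub> x \<in> U}"
      then have "x = inv\<^bsub>G\<^esub> (inv\<^bsub>G\<^esub> x)" "inv\<^bsub>G\<^esub> x \<in> {x \<in> U. inv\<^bsub>G\<^esub> x \<in> U}"
        using Uc grp by (auto simp: group.inv_inv)
      then show "x \<in> (\<lambda>x. inv\<^bsub>G\<^esub> x) ` {x \<in> U. inv\<^bsub>G\<^esub> x \<in> U}" by blast
    qed
  qed
  ultimately show ?thesis unfolding sym_nhds_def by blast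
qed

theorem proposition3p4:
  fixes G :: "('a, 'm) monoid_scheme" and TG :: "'a topology"
    and H :: "('b, 'n) monoid_scheme" and TH :: "'b topology"
  assumes "SIN_group G TG"
    and "topological_group H TH"
  shows "\<forall>K V. compactin TH K \<and> V \<in> sym_nhds G TG \<longrightarrow>
           (\<exists>K' V' W. compactin TH K' \<and> V' \<in> sym_nhds G TG \<and> W \<in> sym_nhds G TG \<and>
              (\<forall>\<phi> \<psi> g g'. \<phi> \<in> cont_homs H TH G TG \<and> \<psi> \<in> cont_homs H TH G TG \<and>
                  g \<in> carrier G \<and> g' \<in> carrier G \<and>
                  (\<phi>, \<psi>) \<in> ent_R H G K' V' \<and> (g', g) \<in> ent_G G W \<longrightarrow>
                  (conj_act G \<phi> g, conj_act G \<psi> g') \<in> ent_R H G K V))"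
proof (intro allI impI)
  fix K V assume KV: "compactin TH K \<and> V \<in> sym_nhds G TG"
  have tg: "topological_group G TG" using assms(1) unfolding SIN_group_def by blast
  have sin: "\<And>U. openin TG U \<Longrightarrow> \<one>\<^bsub>G\<^esub> \<in> U \<Longrightarrow>
        (\<exists>N. N \<subseteq> U \<and> (\<exists>W. openin TG W \<and> \<one>\<^bsub>G\<^esub> \<in> W \<and> W \<subseteq> N) \<and>
             (\<forall>g \<in> carrier G. (\<lambda>x. g \<otimes>\<^bsub>G\<^esub> x \<otimes>\<^bsub>G\<^esub> inv\<^bsub>G\<^esub> g) ` N = N))"
    using assms(1) unfolding SIN_group_def by blast
  have grp: "group G" and tsp: "topspace TG = carrier G"
    using tg unfolding topological_group_def by auto
  have grpH: "group H" and tspH: "topspace TH = carrier H"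
    using assms(2) unfolding topological_group_def by auto
  have Kc: "K \<subseteq> carrier H" using KV compactin_subset_topspace tspH by blast
  have Vo: "openin TG V" "\<one>\<^bsub>G\<^esub> \<in> V" using KV unfolding sym_nhds_def by auto
  obtain N0 W0 where N0: "N0 \<subseteq> V" "openin TG W0" "\<one>\<^bsub>G\<^esub> \<in> W0" "W0 \<subseteq> N0"
     "\<forall>g \<in> carrier G. (\<lambda>x. g \<otimes>\<^bsub>G\<^esub> x \<otimes>\<^bsub>G\<^esub> inv\<^bsub>G\<^esub> g) ` N0 = N0"
    using sin[OF Vo] by blast
  obtain U1 where U1: "openin TG U1" "\<one>\<^bsub>G\<^esub> \<in> U1" "\<forall>x\<in>U1. \<forall>y\<in>U1. x \<otimes>\<^bsub>G\<^esub> y \<in> W0"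
    using tg_mult_nbhd[OF tg N0(2,3)] by blast
  obtain U where U: "openin TG U" "\<one>\<^bsub>G\<^esub> \<in> U" "\<forall>x\<in>U. \<forall>y\<in>U. x \<otimes>\<^bsub>G\<^esub> y \<in> U1"
    using tg_mult_nbhd[OF tg U1(1,2)] by blast
  have Uc: "U \<subseteq> carrier G" using openin_subset[OF U(1)] tsp by simp
  have UU1: "U \<subseteq> U1"
  proof
    fix x assume "x \<in> U"
    then have "x \<otimes>\<^bsub>G\<^esub> \<one>\<^bsub>G\<^esub> \<in> U1" using U by blast
    then show "x \<in> U1" using \<open>x \<in> U\<close> Uc grp by (auto simp: group.is_monoid monoid.r_one)
  qed
  have U3: "\<And>x y z. x \<in> U \<Longrightarrow> y \<in> U \<Longrightarrow> z \<in> U \<Longrightarrow> x \<otimes>\<^bsub>G\<^esub> y \<otimes>\<^bsub>G\<^esub> z \<in> W0"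
    using U(3) U1(3) UU1 by blast
  obtain N1 W1 where N1: "N1 \<subseteq> U" "openin TG W1" "\<one>\<^bsub>G\<^esub> \<in> W1" "W1 \<subseteq> N1"
     "\<forall>g \<in> carrier G. (\<lambda>x. g \<otimes>\<^bsub>G\<^esub> x \<otimes>\<^bsub>G\<^esub> inv\<^bsub>G\<^esub> g) ` N1 = N1"
    using sin[OF U(1,2)] by blast
  define V' where "V' = {x \<in> U. inv\<^bsub>G\<^esub> x \<in> U}"
  define W where "W = {x \<in> W1. inv\<^bsub>G\<^esub> x \<in> W1}"
  have V's: "V' \<in> sym_nhds G TG" unfolding V'_def by (rule tg_sym[OF tg U(1,2)])
  have Ws: "W \<in> sym_nhds G TG" unfolding W_def by (rule tg_sym[OF tg N1(2,3)])
  show "\<exists>K' V' W. compactin TH K' \<and> V' \<in> sym_nhds G TG \<and> W \<in> sym_nhds G TG \<and>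
              (\<forall>\<phi> \<psi> g g'. \<phi> \<in> cont_homs H TH G TG \<and> \<psi> \<in> cont_homs H TH G TG \<and>
                  g \<in> carrier G \<and> g' \<in> carrier G \<and>
                  (\<phi>, \<psi>) \<in> ent_R H G K' V' \<and> (g', g) \<in> ent_G G W \<longrightarrow>
                  (conj_act G \<phi> g, conj_act G \<psi> g') \<in> ent_R H G K V)"
  proof (intro exI conjI allI impI)
    show "compactin TH K" using KV by blast
    show "V' \<in> sym_nhds G TG" by (rule V's)
    show "W \<in> sym_nhds G TG" by (rule Ws)
    fix \<phi> \<psi> g g'
    assume A: "\<phi> \<in> cont_homs H TH G TG \<and> \<psi> \<in> cont_homs H TH G TG \<and>
                  g \<in> carrier G \<and> g' \<in> carrier G \<and>
                  (\<phi>, \<psi>) \<in> ent_R H G K V' \<and> (g', g) \<in> ent_G G W"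
    have hp: "\<phi> \<in> hom H G" "\<psi> \<in> hom H G" using A unfolding cont_homs_def by auto
    have g: "g \<in> carrier G" "g' \<in> carrier G" using A by auto
    have w: "g' \<otimes>\<^bsub>G\<^esub> inv\<^bsub>G\<^esub> g \<in> W" using A unfolding ent_G_def by auto
    show "(conj_act G \<phi> g, conj_act G \<psi> g') \<in> ent_R H G K V"
      unfolding ent_R_def
    proof (clarify)
      fix c assume c: "c \<in> K"
      then have cH: "c \<in> carrier H" using Kc by blast
      define a where "a = \<psi> c"
      define b where "b = \<phi> c"
      define w0 where "w0 = g' \<otimes>\<^bsub>G\<^esub> inv\<^bsub>G\<^esub> g"
      have a: "a \<in> carrier G" unfolding a_def using hp cH by (simp add: hom_in_carrier)
      have b: "b \<in> carrier G" unfolding b_def using hp cH by (simp add: hom_in_carrier)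
      have binv: "\<phi> (inv\<^bsub>H\<^esub> c) = inv\<^bsub>G\<^esub> b"
        unfolding b_def using hp cH grp grpH by (simp add: group_hom.hom_inv group_hom.intro group_hom_axioms.intro)
      have w0c: "w0 \<in> carrier G" unfolding w0_def using g grp by (simp add: group.inv_closed monoid.m_closed group.is_monoid)
      have v1: "a \<otimes>\<^bsub>G\<^esub> inv\<^bsub>G\<^esub> b \<in> U"
        using A c binv unfolding ent_R_def V'_def a_def by auto
      have w0W: "w0 \<in> W" using w unfolding w0_def .
      have w0N1: "w0 \<in> N1" using w0W N1(4) unfolding W_def by blast
      have n: "b \<otimes>\<^bsub>G\<^esub> w0 \<otimes>\<^bsub>G\<^esub> inv\<^bsub>G\<^esub> b \<in> U"
        using N1(5) b w0N1 N1(1) by blast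
      have winv: "inv\<^bsub>G\<^esub> w0 \<in> U" using w0W N1(4) N1(1) unfolding W_def by blast
      have y: "(a \<otimes>\<^bsub>G\<^esub> inv\<^bsub>G\<^esub> b) \<otimes>\<^bsub>G\<^esub> (b \<otimes>\<^bsub>G\<^esub> w0 \<otimes>\<^bsub>G\<^esub> inv\<^bsub>G\<^esub> b) \<otimes>\<^bsub>G\<^esub> inv\<^bsub>G\<^esub> w0 \<in> N0"
        using U3[OF v1 n winv] N0(4) by blast
      have eq: "conj_act G \<psi> g' c \<otimes>\<^bsub>G\<^esub> conj_act G \<phi> g (inv\<^bsub>H\<^esub> c) =
          inv\<^bsub>G\<^esub> g' \<otimes>\<^bsub>G\<^esub> ((a \<otimes>\<^bsub>G\<^esub> inv\<^bsub>G\<^esub> b) \<otimes>\<^bsub>G\<^esub> (b \<otimes>\<^bsub>G\<^esub> w0 \<otimes>\<^bsub>G\<^esub> inv\<^bsub>G\<^esub> b) \<otimes>\<^bsub>G\<^esub> inv\<^bsub>G\<^esub> w0)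
            \<otimes>\<^bsub>G\<^esub> inv\<^bsub>G\<^esub> (inv\<^bsub>G\<^esub> g')"
        unfolding conj_act_def binv a_def[symmetric] w0_def
        by (rule group.conj_eq[OF grp a b g])
      have "inv\<^bsub>G\<^esub> g' \<in> carrier G" using g grp by simp
      then have "inv\<^bsub>G\<^esub> g' \<otimes>\<^bsub>G\<^esub> ((a \<otimes>\<^bsub>G\<^esub> inv\<^bsub>G\<^esub> b) \<otimes>\<^bsub>G\<^esub> (b \<otimes>\<^bsub>G\<^esub> w0 \<otimes>\<^bsub>G\<^esub> inv\<^bsub>G\<^esub> b) \<otimes>\<^bsub>G\<^esub> inv\<^bsub>G\<^esub> w0)
            \<otimes>\<^bsub>G\<^esub> inv\<^bsub>G\<^esub> (inv\<^bsub>G\<^esub> g') \<in> N0"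
        using N0(5) y by blast
      then show "conj_act G \<psi> g' c \<otimes>\<^bsub>G\<^esub> conj_act G \<phi> g (inv\<^bsub>H\<^esub> c) \<in> V"
        using eq N0(1) by auto
    qed
  qed
qed

end
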